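(* Let $q\in\mathbb{C}^\times$ be not a root of unity and $k\in\mathbb{Z}_{>0}$. The polynomials $p_t(q)(x_1,\dots,x_k)$, $1\le t\le k$, are algebraically independent over $\mathbb{C}$.
   Context: For $t,k>0$, $p_t(q)(x_1,\dots,x_k)=\sum_{\lambda\vdash t,\ \ell(\lambda)\le k}q^{-\ell(\lambda)}(q-q^{-1})^{\ell(\lambda)-1}m_\lambda(x_1,\dots,x_k)\in\mathbb{C}[x_1,\dots,x_k]$, where $\lambda$ runs over partitions of $t$ with at most $k$ nonzero parts ($\ell(\lambda)$ the number of nonzero parts) and $m_\lambda$ is the monomial symmetric polynomial. *)

theory Defs
  imports Complex_Main "HOL-Library.Poly_Mapping" "HOL-Library.Multiset"
begin

text \<open>Multivariate polynomials over the complex numbers: finitely supported maps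
from monomials (finitely supported exponent vectors) to coefficients, with the
convolution product of HOL-Library.Poly_Mapping (a commutative ring).
Variable x_i is the monomial with exponent vector single i 1.\<close>

type_synonym cpoly = "(nat \<Rightarrow>\<^sub>0 nat) \<Rightarrow>\<^sub>0 complex"

definition cconst :: "complex \<Rightarrow> cpoly" where
  "cconst c = Poly_Mapping.single 0 c"

definition monomial :: "(nat \<Rightarrow>\<^sub>0 nat) \<Rightarrow> cpoly" where
  "monomial \<alpha> = Poly_Mapping.single \<alpha> 1"

text \<open>Partitions of t with at most k nonzero parts, as multisets of positive parts.
The length of the partition is the size of the multiset.\<close>
definition partitions_le :: "nat \<Rightarrow> nat \<Rightarrow> nat multiset set" where
  "partitions_le t k = {lam. 0 \<notin># lam \<and> sum_mset lam = t \<and> size lam \<le> k}"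

text \<open>Monomial symmetric polynomial m_lambda(x_1,...,x_k): sum of x^alpha over all
exponent vectors alpha supported on {1..k} whose multiset of nonzero entries is lambda.\<close>
definition mono_sym :: "nat \<Rightarrow> nat multiset \<Rightarrow> cpoly" where
  "mono_sym k lam = (\<Sum>\<alpha>\<in>{\<alpha>. Poly_Mapping.keys \<alpha> \<subseteq> {1..k} \<and>
       filter_mset (\<lambda>v. v \<noteq> 0) (image_mset (Poly_Mapping.lookup \<alpha>) (mset_set {1..k})) = lam}.
       monomial \<alpha>)"

definition p_poly :: "complex \<Rightarrow> nat \<Rightarrow> nat \<Rightarrow> cpoly" where
  "p_poly q t k = (\<Sum>lam\<in>partitions_le t k.
       cconst ((inverse q) ^ size lam * (q - inverse q) ^ (size lam - 1)) * mono_sym k lam)"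

definition subst_poly :: "(nat \<Rightarrow> cpoly) \<Rightarrow> cpoly \<Rightarrow> cpoly" where
  "subst_poly G F = (\<Sum>m\<in>Poly_Mapping.keys F. cconst (Poly_Mapping.lookup F m) * (\<Prod>i\<in>Poly_Mapping.keys m. G i ^ Poly_Mapping.lookup m i))"

definition alg_indep_on :: "nat set \<Rightarrow> (nat \<Rightarrow> cpoly) \<Rightarrow> bool" where
  "alg_indep_on I G \<longleftrightarrow>
     (\<forall>F. F \<noteq> 0 \<and> (\<forall>m\<in>Poly_Mapping.keys F. Poly_Mapping.keys m \<subseteq> I) \<longrightarrow> subst_poly G F \<noteq> 0)"

end

theory Submission
  imports Defs "HOL-Computational_Algebra.Computational_Algebra"
begin


definition mon :: "(nat \<Rightarrow> complex) \<Rightarrow> (nat \<Rightarrow>\<^sub>0 nat) \<Rightarrow> complex" where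
  "mon x m = (\<Prod>i\<in>Poly_Mapping.keys m. x i ^ Poly_Mapping.lookup m i)"

definition ev :: "cpoly \<Rightarrow> (nat \<Rightarrow> complex) \<Rightarrow> complex" where
  "ev P x = (\<Sum>m\<in>Poly_Mapping.keys P. Poly_Mapping.lookup P m * mon x m)"

lemma mon_superset:
  assumes "finite S" "Poly_Mapping.keys m \<subseteq> S"
  shows "mon x m = (\<Prod>i\<in>S. x i ^ Poly_Mapping.lookup m i)"
  unfolding mon_def
  by (rule prod.mono_neutral_left) (use assms in \<open>auto simp: in_keys_iff\<close>)

lemma ev_superset:
  assumes "finite S" "Poly_Mapping.keys P \<subseteq> S"
  shows "ev P x = (\<Sum>m\<in>S. Poly_Mapping.lookup P m * mon x m)"
  unfolding ev_def
  by (rule sum.mono_neutral_left) (use assms in \<open>auto simp: in_keys_iff\<close>)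

lemma mon_add: "mon x (a + b) = mon x a * mon x b"
proof -
  let ?S = "Poly_Mapping.keys a \<union> Poly_Mapping.keys b"
  have "mon x (a + b) = (\<Prod>i\<in>?S. x i ^ Poly_Mapping.lookup (a+b) i)"
    by (rule mon_superset) (auto simp: keys_add)
  also have "\<dots> = (\<Prod>i\<in>?S. x i ^ Poly_Mapping.lookup a i) * (\<Prod>i\<in>?S. x i ^ Poly_Mapping.lookup b i)"
    by (simp add: lookup_add power_add prod.distrib)
  also have "\<dots> = mon x a * mon x b"
    by (subst (1 2) mon_superset[symmetric]) auto
  finally show ?thesis .
qed

lemma mon_zero [simp]: "mon x 0 = 1"
  by (simp add: mon_def)

lemma ev_add: "ev (P + Q) x = ev P x + ev Q x"
proof -
  let ?S = "Poly_Mapping.keys P \<union> Poly_Mapping.keys Q"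
  have "ev (P + Q) x = (\<Sum>m\<in>?S. Poly_Mapping.lookup (P+Q) m * mon x m)"
    by (rule ev_superset) (auto simp: keys_add)
  also have "\<dots> = (\<Sum>m\<in>?S. Poly_Mapping.lookup P m * mon x m) + (\<Sum>m\<in>?S. Poly_Mapping.lookup Q m * mon x m)"
    by (simp add: lookup_add distrib_right sum.distrib)
  also have "\<dots> = ev P x + ev Q x"
    by (subst (1 2) ev_superset[symmetric]) auto
  finally show ?thesis .
qed

lemma ev_zero [simp]: "ev 0 x = 0"
  by (simp add: ev_def)

lemma ev_sum: "ev (\<Sum>i\<in>A. f i) x = (\<Sum>i\<in>A. ev (f i) x)"
  by (induction A rule: infinite_finite_induct) (auto simp: ev_add)

lemma ev_single [simp]: "ev (Poly_Mapping.single m c) x = c * mon x m"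
  by (cases "c = 0") (auto simp: ev_def)

lemma poly_mapping_sum_single:
  "P = (\<Sum>m\<in>Poly_Mapping.keys P. Poly_Mapping.single m (Poly_Mapping.lookup P m))"
proof (rule poly_mapping_eqI)
  fix k
  show "Poly_Mapping.lookup P k = Poly_Mapping.lookup (\<Sum>m\<in>Poly_Mapping.keys P. Poly_Mapping.single m (Poly_Mapping.lookup P m)) k"
    by (cases "k \<in> Poly_Mapping.keys P")
       (auto simp: lookup_sum lookup_single when_def in_keys_iff sum.delta' cong: sum.cong)
qed

lemma ev_mult: "ev (P * Q) x = ev P x * ev Q x"
proof -
  have sm: "ev (Poly_Mapping.single a c * Q) x = c * mon x a * ev Q x" for a c
  proof -
    have "Poly_Mapping.single a c * Q = (\<Sum>m\<in>Poly_Mapping.keys Q. Poly_Mapping.single a c * Poly_Mapping.single m (Poly_Mapping.lookup Q m))"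
      by (subst poly_mapping_sum_single[of Q]) (simp add: sum_distrib_left)
    also have "\<dots> = (\<Sum>m\<in>Poly_Mapping.keys Q. Poly_Mapping.single (a + m) (c * Poly_Mapping.lookup Q m))"
      by (simp add: mult_single)
    finally have eq: "Poly_Mapping.single a c * Q = (\<Sum>m\<in>Poly_Mapping.keys Q. Poly_Mapping.single (a + m) (c * Poly_Mapping.lookup Q m))" .
    have "ev (Poly_Mapping.single a c * Q) x = (\<Sum>m\<in>Poly_Mapping.keys Q. ev (Poly_Mapping.single (a + m) (c * Poly_Mapping.lookup Q m)) x)"
      by (simp only: eq ev_sum)
    also have "\<dots> = (\<Sum>m\<in>Poly_Mapping.keys Q. c * mon x a * (Poly_Mapping.lookup Q m * mon x m))"
      by (simp add: mon_add mult_ac)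
    also have "\<dots> = c * mon x a * ev Q x"
      by (simp add: ev_def sum_distrib_left)
    finally show ?thesis .
  qed
  have "P * Q = (\<Sum>m\<in>Poly_Mapping.keys P. Poly_Mapping.single m (Poly_Mapping.lookup P m) * Q)"
    by (subst poly_mapping_sum_single[of P]) (simp add: sum_distrib_right)
  then have "ev (P * Q) x = (\<Sum>m\<in>Poly_Mapping.keys P. Poly_Mapping.lookup P m * mon x m * ev Q x)"
    by (simp add: ev_sum sm)
  then show ?thesis by (simp add: ev_def sum_distrib_right)
qed

lemma ev_one [simp]: "ev 1 x = 1"
proof -
  have "(1::cpoly) = Poly_Mapping.single 0 1" by simp
  then show ?thesis by (metis ev_single mon_zero mult_1)
qed

lemma ev_prod: "ev (\<Prod>i\<in>A. f i) x = (\<Prod>i\<in>A. ev (f i) x)"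
  by (induction A rule: infinite_finite_induct) (auto simp: ev_mult)

lemma ev_power: "ev (P ^ n) x = ev P x ^ n"
  by (induction n) (auto simp: ev_mult)

lemma ev_cconst [simp]: "ev (cconst c) x = c"
  by (simp add: cconst_def)

lemma ev_monomial [simp]: "ev (monomial m) x = mon x m"
  by (simp add: monomial_def)

lemma ev_subst: "ev (subst_poly G F) x = ev F (\<lambda>i. ev (G i) x)"
  unfolding subst_poly_def
  by (simp only: ev_sum ev_mult ev_prod ev_power ev_cconst) (simp add: ev_def[of F] mon_def)

lemma ev_cong:
  assumes "\<forall>m\<in>Poly_Mapping.keys F. Poly_Mapping.keys m \<subseteq> I" "\<forall>i\<in>I. x i = y i"
  shows "ev F x = ev F y"
proof -
  have "mon x m = mon y m" if "m \<in> Poly_Mapping.keys F" for m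
  proof -
    have "\<And>i. i \<in> Poly_Mapping.keys m \<Longrightarrow> x i = y i" using assms that by blast
    then show ?thesis unfolding mon_def by (intro prod.cong) auto
  qed
  then show ?thesis unfolding ev_def by simp
qed



lemma digits_bound:
  fixes a :: "nat \<Rightarrow> nat"
  assumes "\<forall>i<n. a i < N"
  shows "(\<Sum>i<n. a i * N^i) < N^n"
  using assms
proof (induction n)
  case 0 then show ?case by simp
next
  case (Suc n)
  then have IH: "(\<Sum>i<n. a i * N^i) < N^n" and an: "a n < N" by auto
  then have "Suc (a n) \<le> N" by simp
  then have "Suc (a n) * N^n \<le> N * N^n" by (rule mult_right_mono) simp
  moreover have "(\<Sum>i<Suc n. a i * N^i) < N^n + a n * N^n" using IH by simp
  ultimately show ?case by simp
qed

lemma digits_inj: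
  fixes a b :: "nat \<Rightarrow> nat"
  assumes "\<forall>i<n. a i < N" "\<forall>i<n. b i < N" "(\<Sum>i<n. a i * N^i) = (\<Sum>i<n. b i * N^i)"
  shows "\<forall>i<n. a i = b i"
  using assms
proof (induction n)
  case 0 then show ?case by simp
next
  case (Suc n)
  define A where "A = (\<Sum>i<n. a i * N^i)"
  define B where "B = (\<Sum>i<n. b i * N^i)"
  have A: "A < N^n" unfolding A_def using Suc.prems by (intro digits_bound) auto
  have B: "B < N^n" unfolding B_def using Suc.prems by (intro digits_bound) auto
  have eq: "A + a n * N^n = B + b n * N^n" using Suc.prems(3) by (simp add: A_def B_def)
  have Np: "N^n > 0" using A by linarith
  have "(A + a n * N^n) div N^n = a n" using A Np by simp
  moreover have "(B + b n * N^n) div N^n = b n" using B Np by simp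
  ultimately have abn: "a n = b n" using eq by simp
  with eq have "A = B" by simp
  then have "\<forall>i<n. a i = b i" using Suc.prems by (intro Suc.IH) (auto simp: A_def B_def)
  with abn show ?case by (auto simp: less_Suc_eq)
qed

lemma ev_vanish_imp_zero:
  assumes keys: "\<forall>m\<in>Poly_Mapping.keys F. Poly_Mapping.keys m \<subseteq> {..<K}"
    and van: "\<forall>c. ev F c = 0"
  shows "F = 0"
proof (rule ccontr)
  assume "F \<noteq> 0"
  then obtain m0 where m0: "m0 \<in> Poly_Mapping.keys F" by fastforce
  define N where "N = Suc (\<Sum>m\<in>Poly_Mapping.keys F. \<Sum>i<K. Poly_Mapping.lookup m i)"
  have Nb: "Poly_Mapping.lookup m i < N" if "m \<in> Poly_Mapping.keys F" for m i
  proof (cases "i < K")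
    case True
    have "Poly_Mapping.lookup m i \<le> (\<Sum>i<K. Poly_Mapping.lookup m i)"
      using True by (intro member_le_sum) auto
    also have "\<dots> \<le> (\<Sum>m\<in>Poly_Mapping.keys F. \<Sum>i<K. Poly_Mapping.lookup m i)"
      using that by (intro member_le_sum) auto
    finally show ?thesis unfolding N_def by simp
  next
    case False
    then have "i \<notin> Poly_Mapping.keys m" using keys that by auto
    then show ?thesis by (simp add: N_def in_keys_iff)
  qed
  define e where "e m = (\<Sum>i<K. Poly_Mapping.lookup m i * N^i)" for m
  have einj: "m = m'" if "m \<in> Poly_Mapping.keys F" "m' \<in> Poly_Mapping.keys F" "e m = e m'" for m m'
  proof (rule poly_mapping_eqI)
    fix i
    have "\<forall>i<K. Poly_Mapping.lookup m i = Poly_Mapping.lookup m' i"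
      using that Nb by (intro digits_inj[of K _ N]) (auto simp: e_def)
    moreover have "i \<ge> K \<Longrightarrow> Poly_Mapping.lookup m i = 0 \<and> Poly_Mapping.lookup m' i = 0"
    proof -
      assume "i \<ge> K"
      then have "i \<notin> Poly_Mapping.keys m" "i \<notin> Poly_Mapping.keys m'" using keys that by (meson lessThan_iff not_le subsetD)+
      then show ?thesis by (simp add: in_keys_iff)
    qed
    ultimately show "Poly_Mapping.lookup m i = Poly_Mapping.lookup m' i"
      by (cases "i < K") auto
  qed
  define c where "c s = (\<lambda>i. s ^ (N^i))" for s :: complex
  have monc: "mon (c s) m = s ^ e m" if "m \<in> Poly_Mapping.keys F" for s m
  proof -
    have "mon (c s) m = (\<Prod>i<K. (s ^ (N^i)) ^ Poly_Mapping.lookup m i)"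
      unfolding c_def using keys that by (intro mon_superset) auto
    also have "\<dots> = (\<Prod>i<K. s ^ (Poly_Mapping.lookup m i * N^i))"
      by (simp add: power_mult[symmetric] mult.commute)
    also have "\<dots> = s ^ e m" by (simp add: e_def power_sum)
    finally show ?thesis .
  qed
  define p where "p = (\<Sum>m\<in>Poly_Mapping.keys F. monom (Poly_Mapping.lookup F m) (e m))"
  have "poly p s = ev F (c s)" for s
    by (simp add: p_def ev_def poly_sum poly_monom monc)
  then have "p = 0" using van poly_all_0_iff_0 by auto
  moreover have "coeff p (e m0) = Poly_Mapping.lookup F m0"
  proof -
    have "coeff p (e m0) = (\<Sum>m\<in>Poly_Mapping.keys F. if m = m0 then Poly_Mapping.lookup F m else 0)"
      unfolding p_def coeff_sum coeff_monom using einj m0 by (intro sum.cong) auto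
    also have "\<dots> = Poly_Mapping.lookup F m0" using m0 by simp
    finally show ?thesis .
  qed
  ultimately show False using m0 by (simp add: in_keys_iff)
qed



definition gm :: "nat \<Rightarrow> (nat \<Rightarrow>\<^sub>0 nat) \<Rightarrow> nat multiset" where
  "gm k \<alpha> = filter_mset (\<lambda>v. v \<noteq> 0) (image_mset (Poly_Mapping.lookup \<alpha>) (mset_set {1..k}))"

lemma gm_eq:
  assumes "Poly_Mapping.keys \<alpha> \<subseteq> {1..k}"
  shows "gm k \<alpha> = image_mset (Poly_Mapping.lookup \<alpha>) (mset_set (Poly_Mapping.keys \<alpha>))"
proof -
  have "{i \<in> {1..k}. Poly_Mapping.lookup \<alpha> i \<noteq> 0} = Poly_Mapping.keys \<alpha>"
    using assms by (auto simp: in_keys_iff)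
  then show ?thesis
    unfolding gm_def filter_mset_image_mset by (simp add: filter_mset_mset_set)
qed

lemma gm_size: "Poly_Mapping.keys \<alpha> \<subseteq> {1..k} \<Longrightarrow> size (gm k \<alpha>) = card (Poly_Mapping.keys \<alpha>)"
  by (simp add: gm_eq)

lemma gm_sum: "Poly_Mapping.keys \<alpha> \<subseteq> {1..k} \<Longrightarrow> sum_mset (gm k \<alpha>) = (\<Sum>i\<in>{1..k}. Poly_Mapping.lookup \<alpha> i)"
  apply (simp add: gm_eq sum_unfold_sum_mset[symmetric])
  apply (rule sum.mono_neutral_left)
    apply (auto simp: in_keys_iff)
  done

lemma gm_nz: "Poly_Mapping.keys \<alpha> \<subseteq> {1..k} \<Longrightarrow> 0 \<notin># gm k \<alpha>"
  by (auto simp: gm_eq in_keys_iff)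

lemma mem_le_sum_mset: "(x::nat) \<in># M \<Longrightarrow> x \<le> sum_mset M"
proof -
  assume "x \<in># M"
  then obtain N where "M = add_mset x N" by (blast dest: multi_member_split)
  then show ?thesis by simp
qed

lemma finite_partitions_le: "finite (partitions_le t k)"
proof -
  have "partitions_le t k \<subseteq> (\<Union>n\<le>k. multisets_of_size {..t} n)"
    by (auto simp: partitions_le_def multisets_of_size_def dest: mem_le_sum_mset)
  moreover have "finite (\<Union>n\<le>k. multisets_of_size {..t} n)"
    by (auto intro: finite_multisets_of_size)
  ultimately show ?thesis by (rule finite_subset)
qed

definition toPM :: "nat multiset \<Rightarrow> (nat \<Rightarrow>\<^sub>0 nat)" where
  "toPM X = Abs_poly_mapping (count X)"

definition toMS :: "(nat \<Rightarrow>\<^sub>0 nat) \<Rightarrow> nat multiset" where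
  "toMS \<alpha> = Abs_multiset (Poly_Mapping.lookup \<alpha>)"

lemma lookup_toPM [simp]: "Poly_Mapping.lookup (toPM X) = count X"
proof -
  have "{x. count X x \<noteq> 0} = set_mset X" by (auto simp: count_eq_zero_iff)
  then have "finite {x. count X x \<noteq> 0}" by simp
  then show ?thesis unfolding toPM_def by simp
qed

lemma count_toMS [simp]: "count (toMS \<alpha>) = Poly_Mapping.lookup \<alpha>"
proof -
  have "{x. 0 < Poly_Mapping.lookup \<alpha> x} = Poly_Mapping.keys \<alpha>"
    by (simp add: keys.rep_eq neq0_conv)
  then have "finite {x. 0 < Poly_Mapping.lookup \<alpha> x}" by simp
  then show ?thesis unfolding toMS_def by simp
qed

lemma toMS_toPM [simp]: "toMS (toPM X) = X"
  by (rule multiset_eqI) simp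

lemma toPM_toMS [simp]: "toPM (toMS \<alpha>) = \<alpha>"
  by (rule poly_mapping_eqI) simp

lemma keys_toPM [simp]: "Poly_Mapping.keys (toPM X) = set_mset X"
  by (auto simp: in_keys_iff)

lemma set_toMS [simp]: "set_mset (toMS \<alpha>) = Poly_Mapping.keys \<alpha>"
  by (auto simp: in_keys_iff simp flip: count_greater_zero_iff)

definition Mt :: "nat \<Rightarrow> nat \<Rightarrow> (nat \<Rightarrow>\<^sub>0 nat) set" where
  "Mt k t = {\<alpha>. Poly_Mapping.keys \<alpha> \<subseteq> {1..k} \<and> (\<Sum>i\<in>{1..k}. Poly_Mapping.lookup \<alpha> i) = t}"

lemma size_sum_count:
  assumes "set_mset X \<subseteq> A" "finite A"
  shows "size X = (\<Sum>i\<in>A. count X i)"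
  unfolding size_multiset_overloaded_eq
  by (rule sum.mono_neutral_left) (use assms in \<open>auto simp: not_in_iff\<close>)

lemma Mt_eq: "Mt k t = toPM ` multisets_of_size {1..k} t"
proof (intro equalityI subsetI)
  fix \<alpha> assume "\<alpha> \<in> Mt k t"
  then have "toMS \<alpha> \<in> multisets_of_size {1..k} t"
    by (auto simp: Mt_def multisets_of_size_def size_sum_count[of _ "{1..k}"])
  then show "\<alpha> \<in> toPM ` multisets_of_size {1..k} t"
    by (metis image_eqI toPM_toMS)
next
  fix \<alpha> assume "\<alpha> \<in> toPM ` multisets_of_size {1..k} t"
  then obtain X where "X \<in> multisets_of_size {1..k} t" "\<alpha> = toPM X" by auto
  then show "\<alpha> \<in> Mt k t"
    by (auto simp: Mt_def multisets_of_size_def size_sum_count[of _ "{1..k}"])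
qed

lemma finite_Mt: "finite (Mt k t)"
  by (simp add: Mt_eq finite_multisets_of_size)

definition Cq :: "complex \<Rightarrow> nat \<Rightarrow> complex" where
  "Cq q l = (inverse q) ^ l * (q - inverse q) ^ (l - 1)"

lemma ev_p_poly:
  "ev (p_poly q t k) x = (\<Sum>\<alpha>\<in>Mt k t. Cq q (card (Poly_Mapping.keys \<alpha>)) * mon x \<alpha>)"
proof -
  have "ev (p_poly q t k) x = (\<Sum>lam\<in>partitions_le t k. Cq q (size lam) *
          (\<Sum>\<alpha>\<in>{\<alpha> \<in> Mt k t. gm k \<alpha> = lam}. mon x \<alpha>))"
    unfolding p_poly_def ev_sum
  proof (rule sum.cong[OF refl])
    fix lam assume lam: "lam \<in> partitions_le t k"
    have "{\<alpha>. Poly_Mapping.keys \<alpha> \<subseteq> {1..k} \<and>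
       filter_mset (\<lambda>v. v \<noteq> 0) (image_mset (Poly_Mapping.lookup \<alpha>) (mset_set {1..k})) = lam}
       = {\<alpha> \<in> Mt k t. gm k \<alpha> = lam}"
    proof -
      have "{\<alpha>. Poly_Mapping.keys \<alpha> \<subseteq> {1..k} \<and>
       filter_mset (\<lambda>v. v \<noteq> 0) (image_mset (Poly_Mapping.lookup \<alpha>) (mset_set {1..k})) = lam}
       = {\<alpha>. Poly_Mapping.keys \<alpha> \<subseteq> {1..k} \<and> gm k \<alpha> = lam}" by (simp add: gm_def)
      also have "\<dots> = {\<alpha> \<in> Mt k t. gm k \<alpha> = lam}"
        using lam by (auto simp: Mt_def partitions_le_def gm_sum)
      finally show ?thesis .
    qed
    then show "ev (cconst (inverse q ^ size lam * (q - inverse q) ^ (size lam - 1)) * mono_sym k lam) x =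
       Cq q (size lam) * (\<Sum>\<alpha>\<in>{\<alpha> \<in> Mt k t. gm k \<alpha> = lam}. mon x \<alpha>)"
      by (simp add: ev_mult mono_sym_def ev_sum Cq_def)
  qed
  also have "\<dots> = (\<Sum>lam\<in>partitions_le t k. (\<Sum>\<alpha>\<in>{\<alpha> \<in> Mt k t. gm k \<alpha> = lam}.
          Cq q (card (Poly_Mapping.keys \<alpha>)) * mon x \<alpha>))"
    by (auto simp: sum_distrib_left Mt_def gm_size intro!: sum.cong)
  also have "\<dots> = (\<Sum>\<alpha>\<in>Mt k t. Cq q (card (Poly_Mapping.keys \<alpha>)) * mon x \<alpha>)"
  proof (rule sum.group[OF finite_Mt finite_partitions_le])
    show "gm k ` Mt k t \<subseteq> partitions_le t k"
    proof
      fix lam assume "lam \<in> gm k ` Mt k t"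
      then obtain \<alpha> where a: "\<alpha> \<in> Mt k t" "lam = gm k \<alpha>" by auto
      then have ks: "Poly_Mapping.keys \<alpha> \<subseteq> {1..k}" by (simp add: Mt_def)
      then have "card (Poly_Mapping.keys \<alpha>) \<le> k" using card_mono[of "{1..k}"] by fastforce
      then show "lam \<in> partitions_le t k"
        using a ks by (auto simp: partitions_le_def gm_size gm_sum gm_nz Mt_def)
    qed
  qed
  finally show ?thesis .
qed



definition gq :: "complex \<Rightarrow> complex \<Rightarrow> complex fps" where
  "gq a y = Abs_fps (\<lambda>n. if n = 0 then 1 else a * y ^ n)"

definition Sfps :: "complex \<Rightarrow> (nat \<Rightarrow> complex) \<Rightarrow> nat \<Rightarrow> complex fps" where
  "Sfps a x k = (\<Prod>i\<in>{1..k}. gq a (x i))"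

lemma Sfps_nth:
  "Sfps a x k $ t = (\<Sum>\<alpha>\<in>Mt k t. a ^ card (Poly_Mapping.keys \<alpha>) * mon x \<alpha>)"
proof -
  have inj: "inj_on toPM A" for A by (metis inj_on_inverseI toMS_toPM)
  have "Sfps a x k $ t = (\<Sum>X\<in>multisets_of_size {1..k} t. \<Prod>i\<in>{1..k}. gq a (x i) $ count X i)"
    unfolding Sfps_def by (rule fps_prod_nth') simp
  also have "\<dots> = (\<Sum>X\<in>multisets_of_size {1..k} t. a ^ card (Poly_Mapping.keys (toPM X)) * mon x (toPM X))"
  proof (rule sum.cong[OF refl])
    fix X assume X: "X \<in> multisets_of_size {1..k} t"
    then have sub: "set_mset X \<subseteq> {1..k}" by (simp add: multisets_of_size_def)
    have "(\<Prod>i\<in>{1..k}. gq a (x i) $ count X i) = (\<Prod>i\<in>set_mset X. gq a (x i) $ count X i)"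
      using sub by (intro prod.mono_neutral_right) (auto simp: gq_def not_in_iff)
    also have "\<dots> = (\<Prod>i\<in>set_mset X. a * x i ^ count X i)"
      by (intro prod.cong) (auto simp: gq_def count_eq_zero_iff)
    also have "\<dots> = a ^ card (set_mset X) * (\<Prod>i\<in>set_mset X. x i ^ count X i)"
      by (simp add: prod.distrib)
    finally show "(\<Prod>i\<in>{1..k}. gq a (x i) $ count X i) = a ^ card (Poly_Mapping.keys (toPM X)) * mon x (toPM X)"
      by (simp add: mon_def)
  qed
  also have "\<dots> = (\<Sum>\<alpha>\<in>Mt k t. a ^ card (Poly_Mapping.keys \<alpha>) * mon x \<alpha>)"
    unfolding Mt_eq by (subst sum.reindex[OF inj]) simp
  finally show ?thesis .
qed

lemma ev_p_poly_Sfps: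
  assumes "t > 0" "q \<noteq> 0"
  shows "(q - inverse q) * ev (p_poly q t k) x = Sfps (inverse q * (q - inverse q)) x k $ t"
proof -
  have "(q - inverse q) * Cq q (card (Poly_Mapping.keys \<alpha>)) = (inverse q * (q - inverse q)) ^ card (Poly_Mapping.keys \<alpha>)"
    if "\<alpha> \<in> Mt k t" for \<alpha>
  proof -
    have "Poly_Mapping.keys \<alpha> \<noteq> {}"
    proof
      assume "Poly_Mapping.keys \<alpha> = {}"
      then have "\<alpha> = 0" by simp
      then show False using that assms by (simp add: Mt_def)
    qed
    then have "card (Poly_Mapping.keys \<alpha>) \<ge> 1" by (simp add: Suc_le_eq card_gt_0_iff)
    then obtain l where l: "card (Poly_Mapping.keys \<alpha>) = Suc l" by (metis One_nat_def Suc_le_D)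
    show ?thesis unfolding l Cq_def by (simp add: power_mult_distrib)
  qed
  then show ?thesis
    by (simp add: ev_p_poly Sfps_nth sum_distrib_left mult.assoc[symmetric])
qed

lemma gq_mult:
  "gq a y * (1 - fps_const y * fps_X) = 1 - fps_const ((1 - a) * y) * fps_X"
proof (rule fps_ext)
  fix n
  have "(gq a y * (1 - fps_const y * fps_X)) $ n = gq a y $ n - y * (fps_X * gq a y) $ n"
    by (simp add: algebra_simps)
  also have "\<dots> = (1 - fps_const ((1 - a) * y) * fps_X) $ n"
  proof (cases n)
    case 0 then show ?thesis by (simp add: gq_def fps_X_mult_nth)
  next
    case (Suc m)
    then show ?thesis
      by (cases m) (auto simp: gq_def fps_X_mult_nth algebra_simps)
  qed
  finally show "(gq a y * (1 - fps_const y * fps_X)) $ n = (1 - fps_const ((1 - a) * y) * fps_X) $ n" .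
qed

lemma prod_scale:
  fixes f g :: "nat \<Rightarrow> complex fps"
  assumes "\<forall>i\<in>A. \<forall>n. f i $ n = b ^ n * g i $ n"
  shows "(\<Prod>i\<in>A. f i) $ n = b ^ n * (\<Prod>i\<in>A. g i) $ n"
  using assms
proof (induction A arbitrary: n rule: infinite_finite_induct)
  case (infinite A) then show ?case by simp
next
  case empty then show ?case by (simp add: fps_one_nth)
next
  case (insert j A)
  have "(\<Prod>i\<in>insert j A. f i) $ n = (f j * (\<Prod>i\<in>A. f i)) $ n" using insert by simp
  also have "\<dots> = (\<Sum>i=0..n. f j $ i * (\<Prod>i\<in>A. f i) $ (n - i))" by (rule fps_mult_nth)
  also have "\<dots> = (\<Sum>i=0..n. b ^ n * (g j $ i * (\<Prod>i\<in>A. g i) $ (n - i)))"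
  proof (rule sum.cong[OF refl])
    fix i assume "i \<in> {0..n}"
    then have "b ^ n = b ^ i * b ^ (n - i)" by (simp add: power_add[symmetric])
    then show "f j $ i * (\<Prod>i\<in>A. f i) $ (n - i) = b ^ n * (g j $ i * (\<Prod>i\<in>A. g i) $ (n - i))"
      using insert by simp
  qed
  also have "\<dots> = b ^ n * (\<Prod>i\<in>insert j A. g i) $ n"
    using insert by (simp add: fps_mult_nth sum_distrib_left)
  finally show ?case .
qed

definition Efps :: "(nat \<Rightarrow> complex) \<Rightarrow> nat \<Rightarrow> complex fps" where
  "Efps x k = (\<Prod>i\<in>{1..k}. 1 - fps_const (x i) * fps_X)"

lemma SE_eq:
  "(Sfps (1 - b) x k * Efps x k) $ n = b ^ n * Efps x k $ n"
proof -
  have "Sfps (1 - b) x k * Efps x k = (\<Prod>i\<in>{1..k}. 1 - fps_const (b * x i) * fps_X)"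
    by (simp add: Sfps_def Efps_def prod.distrib[symmetric] gq_mult)
  also have "\<dots> $ n = b ^ n * Efps x k $ n"
    unfolding Efps_def
  proof (rule prod_scale, intro ballI allI)
    fix i n
    show "(1 - fps_const (b * x i) * fps_X) $ n = b ^ n * (1 - fps_const (x i) * fps_X) $ n"
      by (cases n) (auto simp: fps_X_mult_nth algebra_simps)
  qed
  finally show ?thesis .
qed

lemma toPM_empty [simp]: "toPM {#} = 0"
  by (rule poly_mapping_eqI) simp

lemma Sfps_0: "Sfps a x k $ 0 = 1"
  by (simp add: Sfps_nth Mt_eq)



lemma ex_eps:
  fixes Dn :: "nat \<Rightarrow> complex"
  assumes b: "\<forall>t. 1 \<le> t \<and> t \<le> k \<longrightarrow> b ^ t \<noteq> 1" and D0: "Dn 0 = 1"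
  shows "n \<le> k \<Longrightarrow> \<exists>\<epsilon>. \<epsilon> 0 = 1 \<and> (\<forall>t. 1 \<le> t \<and> t \<le> n \<longrightarrow> b ^ t * \<epsilon> t = (\<Sum>j\<le>t. \<epsilon> j * Dn (t - j)))"
proof (induction n)
  case 0 then show ?case by (intro exI[of _ "\<lambda>_. 1"]) auto
next
  case (Suc n)
  then obtain \<epsilon> where e0: "\<epsilon> 0 = 1" and e: "\<forall>t. 1 \<le> t \<and> t \<le> n \<longrightarrow> b ^ t * \<epsilon> t = (\<Sum>j\<le>t. \<epsilon> j * Dn (t - j))"
    by auto
  define v where "v = (\<Sum>j<Suc n. \<epsilon> j * Dn (Suc n - j)) / (b ^ Suc n - 1)"
  define \<epsilon>' where "\<epsilon>' = \<epsilon>(Suc n := v)"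
  have bn: "b ^ Suc n - 1 \<noteq> 0" using b Suc.prems by auto
  have "b ^ t * \<epsilon>' t = (\<Sum>j\<le>t. \<epsilon>' j * Dn (t - j))" if t: "1 \<le> t" "t \<le> Suc n" for t
  proof (cases "t = Suc n")
    case True
    have "(\<Sum>j\<le>t. \<epsilon>' j * Dn (t - j)) = v + (\<Sum>j<Suc n. \<epsilon> j * Dn (Suc n - j))"
      unfolding True by (simp add: \<epsilon>'_def D0 lessThan_Suc_atMost[symmetric])
    also have "\<dots> = b ^ t * \<epsilon>' t"
      using bn unfolding True \<epsilon>'_def v_def by (simp add: field_simps)
    finally show ?thesis by simp
  next
    case False
    then have "t \<le> n" using t by simp
    then have "(\<Sum>j\<le>t. \<epsilon>' j * Dn (t - j)) = (\<Sum>j\<le>t. \<epsilon> j * Dn (t - j))"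
      by (intro sum.cong) (auto simp: \<epsilon>'_def)
    then show ?thesis using e t \<open>t \<le> n\<close> by (simp add: \<epsilon>'_def)
  qed
  moreover have "\<epsilon>' 0 = 1" using e0 by (simp add: \<epsilon>'_def)
  ultimately show ?case by blast
qed

lemma reflect_lin: "reflect_poly [:-r, 1:] = [:1, -r::complex:]"
  by (simp add: reflect_poly_def)

lemma surj_S:
  assumes b: "\<forall>t. 1 \<le> t \<and> t \<le> k \<longrightarrow> b ^ t \<noteq> 1"
  shows "\<exists>x. \<forall>t. 1 \<le> t \<and> t \<le> k \<longrightarrow> Sfps (1 - b) x k $ t = d t"
proof -
  define Dn where "Dn m = (if m = 0 then 1 else d m)" for m
  obtain \<epsilon> where e0: "\<epsilon> 0 = 1" and e: "\<forall>t. 1 \<le> t \<and> t \<le> k \<longrightarrow> b ^ t * \<epsilon> t = (\<Sum>j\<le>t. \<epsilon> j * Dn (t - j))"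
    using ex_eps[OF b, of Dn k] by (auto simp: Dn_def)
  define P where "P = (\<Sum>j\<le>k. monom (\<epsilon> j) (k - j))"
  have cP: "coeff P i = (if i \<le> k then \<epsilon> (k - i) else 0)" for i
  proof -
    have "coeff P i = (\<Sum>j\<le>k. if j = k - i \<and> i \<le> k then \<epsilon> j else 0)"
      unfolding P_def coeff_sum coeff_monom by (intro sum.cong) auto
    also have "\<dots> = (if i \<le> k then \<epsilon> (k - i) else 0)"
      by (cases "i \<le> k") auto
    finally show ?thesis .
  qed
  have dP: "degree P = k"
  proof (rule antisym)
    show "degree P \<le> k" by (rule degree_le) (auto simp: cP)
    show "k \<le> degree P" by (rule le_degree) (simp add: cP e0)
  qed
  have lP: "lead_coeff P = 1" by (simp add: dP cP e0)
  obtain root where root: "smult (lead_coeff P) (\<Prod>i<degree P. [:-root i, 1:]) = P"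
    using complex_poly_decompose' by blast
  then have Pr: "P = (\<Prod>i<k. [:-root i, 1:])" using lP dP by simp
  define x where "x i = root (i - 1)" for i
  have "Efps x k = (\<Prod>i<k. 1 - fps_const (root i) * fps_X)"
    unfolding Efps_def x_def by (simp add: prod.atLeast1_atMost_eq)
  also have "\<dots> = fps_of_poly (reflect_poly P)"
    unfolding Pr reflect_poly_prod reflect_lin fps_of_poly_prod
    by (intro prod.cong) (auto simp: fps_of_poly_pCons)
  finally have Ex: "Efps x k = fps_of_poly (reflect_poly P)" .
  have Ej: "Efps x k $ j = \<epsilon> j" if "j \<le> k" for j
    using that by (simp add: Ex coeff_reflect_poly dP cP)
  define S where "S = Sfps (1 - b) x k"
  have S0: "S $ 0 = 1" by (simp add: S_def Sfps_0)
  have "1 \<le> t \<and> t \<le> k \<longrightarrow> S $ t = d t" for t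
  proof (induction t rule: less_induct)
    case (less t)
    show ?case
    proof
      assume t: "1 \<le> t \<and> t \<le> k"
      have SD: "S $ (t - j) = Dn (t - j)" if "j \<in> {Suc 0..t}" for j
      proof (cases "t - j = 0")
        case True then show ?thesis using S0 by (simp add: Dn_def)
      next
        case False
        then show ?thesis using less.IH[of "t - j"] that t by (auto simp: Dn_def)
      qed
      have "(Efps x k * S) $ t = b ^ t * Efps x k $ t"
        using SE_eq[of b x k t] by (simp add: S_def mult.commute)
      also have "\<dots> = (\<Sum>j\<le>t. \<epsilon> j * Dn (t - j))" using e t Ej by simp
      also have "\<dots> = Dn t + (\<Sum>j\<in>{Suc 0..t}. \<epsilon> j * Dn (t - j))"
        by (simp add: atMost_atLeast0 sum.atLeast_Suc_atMost e0)
      finally have 1: "(Efps x k * S) $ t = Dn t + (\<Sum>j\<in>{Suc 0..t}. \<epsilon> j * Dn (t - j))" .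
      have "(Efps x k * S) $ t = (\<Sum>j=0..t. Efps x k $ j * S $ (t - j))" by (rule fps_mult_nth)
      also have "\<dots> = S $ t + (\<Sum>j\<in>{Suc 0..t}. \<epsilon> j * Dn (t - j))"
        using t by (simp add: sum.atLeast_Suc_atMost Ej e0 SD)
      finally show "S $ t = d t" using 1 t by (simp add: Dn_def)
    qed
  qed
  then show ?thesis unfolding S_def by blast
qed



theorem mainTheorem17:
  fixes q :: complex and k :: nat
  assumes "q \<noteq> 0"
    and "\<forall>n::nat. n > 0 \<longrightarrow> q ^ n \<noteq> 1"
    and "k > 0"
  shows "alg_indep_on {1..k} (\<lambda>t. p_poly q t k)"
  unfolding alg_indep_on_def
proof (intro allI impI)
  fix F :: cpoly
  assume F: "F \<noteq> 0 \<and> (\<forall>m\<in>Poly_Mapping.keys F. Poly_Mapping.keys m \<subseteq> {1..k})"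
  show "subst_poly (\<lambda>t. p_poly q t k) F \<noteq> 0"
  proof
    assume sub: "subst_poly (\<lambda>t. p_poly q t k) F = 0"
    have qq: "q - inverse q \<noteq> 0"
    proof
      assume "q - inverse q = 0"
      then have "q * q = 1" using assms(1) by (simp add: field_simps)
      then show False using assms(2)[rule_format, of 2] by (simp add: power2_eq_square)
    qed
    define b where "b = inverse q ^ 2"
    have ab: "1 - b = inverse q * (q - inverse q)"
    proof -
      have "inverse q * q = 1" using assms(1) by simp
      then show ?thesis by (simp add: b_def power2_eq_square algebra_simps)
    qed
    have bt: "\<forall>t. 1 \<le> t \<and> t \<le> k \<longrightarrow> b ^ t \<noteq> 1"
    proof (intro allI impI)
      fix t :: nat assume t: "1 \<le> t \<and> t \<le> k"
      show "b ^ t \<noteq> 1"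
      proof
        assume "b ^ t = 1"
        then have "inverse (q ^ (2 * t)) = 1" by (simp add: b_def power_mult power_inverse)
        then have "q ^ (2 * t) = 1" by (metis inverse_1 inverse_inverse_eq)
        then show False using assms(2) t by auto
      qed
    qed
    have "ev F c = 0" for c
    proof -
      obtain x where x: "\<forall>t. 1 \<le> t \<and> t \<le> k \<longrightarrow> Sfps (1 - b) x k $ t = (q - inverse q) * c t"
        using surj_S[OF bt, of "\<lambda>t. (q - inverse q) * c t"] by blast
      have "\<forall>i\<in>{1..k}. ev (p_poly q i k) x = c i"
      proof
        fix i assume i: "i \<in> {1..k}"
        have i0: "i > 0" using i by auto
        have "(q - inverse q) * ev (p_poly q i k) x = Sfps (1 - b) x k $ i"
          unfolding ab by (rule ev_p_poly_Sfps[OF i0 assms(1)])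
        also have "\<dots> = (q - inverse q) * c i" using x i by auto
        finally have "(q - inverse q) * ev (p_poly q i k) x = (q - inverse q) * c i" .
        then show "ev (p_poly q i k) x = c i" using qq by simp
      qed
      then have "ev F (\<lambda>i. ev (p_poly q i k) x) = ev F c"
        using F by (intro ev_cong[of F "{1..k}"]) auto
      moreover have "ev F (\<lambda>i. ev (p_poly q i k) x) = 0"
        using sub ev_subst[of "\<lambda>t. p_poly q t k" F x] by simp
      ultimately show ?thesis by simp
    qed
    moreover have "\<forall>m\<in>Poly_Mapping.keys F. Poly_Mapping.keys m \<subseteq> {..<Suc k}"
    proof -
      have "{1..k} \<subseteq> {..<Suc k}" by auto
      then show ?thesis using F by blast
    qed
    ultimately have "F = 0" using ev_vanish_imp_zero by blast
    then show False using F by simp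
  qed
qed

end
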